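(* Let $(\lambda_n)_n$, $(\nu_n)_n$ and, for each $j\in\mathbb{N}$, $(\rho_{j,n})_n$ be sequences of positive numbers, and assume $\lambda_n/\nu_n\to0$ as $n\to\infty$. Then, after extraction of a subsequence in $n$, there exists a sequence $(\mu_n)_n$ of positive numbers such that $\lambda_n/\mu_n\to0$ and $\mu_n/\nu_n\to0$, and for every $k\in\mathbb{N}$, either $\mu_n/\rho_{k,n}\to0$ or $\rho_{k,n}/\mu_n\to0$. *)

theory Defs
  imports Complex_Main
begin

end

theory Submission imports Defs "HOL-Analysis.Analysis" "HOL-Library.Diagonal_Subsequence" begin
lemma L1: fixes D X :: "nat \<Rightarrow> real"
  assumes "filterlim D at_top F" "c > 0" "eventually (\<lambda>n. X n \<ge> c * D n) F"
  shows "filterlim X at_top F"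
proof -
  have "filterlim (\<lambda>n. c * D n) at_top F"
    by (rule filterlim_tendsto_pos_mult_at_top[OF tendsto_const assms(2) assms(1)])
  then show ?thesis using assms(3) filterlim_at_top_mono by blast
qed
lemma L2: fixes D X :: "nat \<Rightarrow> real"
  assumes "filterlim D at_top F" "c > 0" "eventually (\<lambda>n. X n \<le> - c * D n) F"
  shows "filterlim X at_bot F"
proof -
  have "filterlim (\<lambda>n. - X n) at_top F"
    by (rule L1[OF assms(1,2)]) (use assms(3) in \<open>auto elim: eventually_mono\<close>)
  then show ?thesis by (simp add: filterlim_uminus_at_top)
qed

theorem claimB1:
  fixes lam nu :: "nat \<Rightarrow> real" and rho :: "nat \<Rightarrow> nat \<Rightarrow> real"
  assumes lam_pos: "\<And>n. lam n > 0"
    and nu_pos: "\<And>n. nu n > 0"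
    and rho_pos: "\<And>j n. rho j n > 0"
    and lim: "(\<lambda>n. lam n / nu n) \<longlonglongrightarrow> 0"
  shows "\<exists>\<phi> :: nat \<Rightarrow> nat. strict_mono \<phi> \<and>
           (\<exists>mu :: nat \<Rightarrow> real. (\<forall>n. mu n > 0) \<and>
              (\<lambda>n. lam (\<phi> n) / mu n) \<longlonglongrightarrow> 0 \<and>
              (\<lambda>n. mu n / nu (\<phi> n)) \<longlonglongrightarrow> 0 \<and>
              (\<forall>k. (\<lambda>n. mu n / rho k (\<phi> n)) \<longlonglongrightarrow> 0 \<or>
                   (\<lambda>n. rho k (\<phi> n) / mu n) \<longlonglongrightarrow> 0))"
proof -
  define D where "D n = ln (nu n) - ln (lam n)" for n
  define p where "p k n = (ln (rho k n) - ln (lam n)) / D n" for k n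
  define a where "a k n = arctan (p k n)" for k n
  have D0: "filterlim D at_top sequentially"
  proof -
    have "filterlim (\<lambda>n. lam n / nu n) (at_right 0) sequentially"
      using lim lam_pos nu_pos by (auto intro!: tendsto_imp_filterlim_at_right always_eventually)
    then have "filterlim (\<lambda>n. inverse (lam n / nu n)) at_top sequentially"
      using filterlim_compose filterlim_inverse_at_top_right by blast
    then have "filterlim (\<lambda>n. ln (inverse (lam n / nu n))) at_top sequentially"
      using filterlim_compose ln_at_top by blast
    moreover have "ln (inverse (lam n / nu n)) = D n" for n
      using lam_pos[of n] nu_pos[of n] by (simp add: D_def ln_div ln_inverse)
    ultimately show ?thesis by simp
  qed
  interpret subseqs "\<lambda>k r. convergent (\<lambda>n. a k (r n))"
  proof
    fix k and s :: "nat \<Rightarrow> nat" assume "strict_mono s"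
    have "bounded (range (\<lambda>n. a k (s n)))"
    proof -
      have "\<bar>a k (s n)\<bar> \<le> pi/2" for n
        using arctan_lbound[of "p k (s n)"] arctan_ubound[of "p k (s n)"] by (simp add: a_def abs_le_iff)
      then show ?thesis unfolding bounded_iff by (intro exI[of _ "pi/2"]) auto
    qed
    then obtain l r where "strict_mono r" "((\<lambda>n. a k (s n)) \<circ> r) \<longlonglongrightarrow> l"
      using bounded_imp_convergent_subsequence by blast
    then show "\<exists>r'. strict_mono r' \<and> convergent (\<lambda>n. a k ((s \<circ> r') n))"
      by (auto simp: convergent_def o_def)
  qed
  define \<phi> where "\<phi> = diagseq"
  have phi: "strict_mono \<phi>" by (simp add: \<phi>_def subseq_diagseq)
  have conv: "convergent (\<lambda>n. a k (\<phi> n))" for k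
  proof -
    have "convergent (\<lambda>n. a k ((diagseq \<circ> (+) (Suc k)) n))"
      by (rule diagseq_holds) (auto simp: convergent_def o_def intro: LIMSEQ_subseq_LIMSEQ[unfolded o_def])
    then obtain L where "(\<lambda>n. a k (\<phi> (n + Suc k))) \<longlonglongrightarrow> L"
      by (auto simp: \<phi>_def o_def convergent_def add.commute)
    then show ?thesis
      using LIMSEQ_offset convergent_def by blast
  qed
  define q where "q k = lim (\<lambda>n. a k (\<phi> n))" for k
  have qlim: "(\<lambda>n. a k (\<phi> n)) \<longlonglongrightarrow> q k" for k
    using conv by (simp add: q_def convergent_LIMSEQ_iff)
  have "uncountable ({0<..<arctan 1} - range q)"
    by (rule uncountable_minus_countable) (auto simp: uncountable_open_interval)
  then have "{0<..<arctan 1} - range q \<noteq> {}" by (metis countable_empty)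
  then obtain t where t: "t \<in> {0<..<arctan 1}" "t \<notin> range q"
    by blast
  define s where "s = tan t"
  have tpi: "t < pi/4" using t by (simp add: arctan_one)
  have ats: "arctan s = t" unfolding s_def using t tpi by (intro arctan_tan) auto
  have s01: "0 < s" "s < 1"
    using t ats arctan_less_iff[of 0 s] arctan_less_iff[of s 1] by auto
  define mu where "mu n = lam (\<phi> n) * exp (s * D (\<phi> n))" for n
  have Dphi: "filterlim (\<lambda>n. D (\<phi> n)) at_top sequentially"
    using filterlim_compose[OF D0 filterlim_subseq[OF phi]] by simp
  have mupos: "\<forall>n. mu n > 0" by (simp add: mu_def lam_pos)
  have e1: "lam (\<phi> n) / mu n = exp (- s * D (\<phi> n))" for n
    using lam_pos[of "\<phi> n"] by (simp add: mu_def exp_minus field_simps)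
  have e2: "mu n / nu (\<phi> n) = exp (- (1 - s) * D (\<phi> n))" for n
  proof -
    have "nu (\<phi> n) = lam (\<phi> n) * exp (D (\<phi> n))"
      using lam_pos[of "\<phi> n"] nu_pos[of "\<phi> n"] by (simp add: D_def exp_diff)
    then show ?thesis using lam_pos[of "\<phi> n"]
      by (simp add: mu_def algebra_simps exp_diff exp_minus field_simps)
  qed
  define E where "E k n = ln (rho k (\<phi> n)) - ln (lam (\<phi> n)) - s * D (\<phi> n)" for k n
  have e3: "rho k (\<phi> n) / mu n = exp (E k n)" for k n
    using lam_pos[of "\<phi> n"] rho_pos[of k "\<phi> n"]
    by (simp add: mu_def E_def exp_diff)
  have e4: "mu n / rho k (\<phi> n) = exp (- E k n)" for k n
    using e3[of k n] by (metis exp_minus inverse_divide)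
  have L0: "(\<lambda>n. exp (X n)) \<longlonglongrightarrow> 0" if "filterlim X at_bot sequentially" for X :: "nat \<Rightarrow> real"
    using filterlim_compose[OF exp_at_bot that] by simp
  have lim1: "(\<lambda>n. lam (\<phi> n) / mu n) \<longlonglongrightarrow> 0"
    unfolding e1 by (rule L0, rule L2[OF Dphi, of s]) (use s01 in auto)
  have lim2: "(\<lambda>n. mu n / nu (\<phi> n)) \<longlonglongrightarrow> 0"
    unfolding e2 by (rule L0, rule L2[OF Dphi, of "1 - s"]) (use s01 in auto)
  have Dpos: "eventually (\<lambda>n. D (\<phi> n) > 0) sequentially"
    using Dphi by (simp add: filterlim_at_top_dense)
  have Ep: "E k n = D (\<phi> n) * (p k (\<phi> n) - s)" if "D (\<phi> n) > 0" for k n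
  proof -
    have "D (\<phi> n) * p k (\<phi> n) = ln (rho k (\<phi> n)) - ln (lam (\<phi> n))"
      using that by (simp add: p_def)
    then show ?thesis by (simp add: E_def right_diff_distrib mult.commute)
  qed
  have lim3: "(\<lambda>n. mu n / rho k (\<phi> n)) \<longlonglongrightarrow> 0 \<or> (\<lambda>n. rho k (\<phi> n) / mu n) \<longlonglongrightarrow> 0" for k
  proof (cases "q k > t")
    case True
    define c where "c = (q k + t) / 2"
    have qk: "q k \<le> pi/2"
      using qlim[of k] by (rule LIMSEQ_le_const2) (use arctan_ubound[THEN less_imp_le] in \<open>auto simp: a_def\<close>)
    have c: "t < c" "c < q k" "-(pi/2) < c" "c < pi/2" using True t tpi qk pi_gt3 by (auto simp: c_def)
    define s' where "s' = tan c"
    have acs: "arctan s' = c" unfolding s'_def using c by (intro arctan_tan) auto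
    have ss: "s < s'" using acs ats c arctan_less_iff[of s s'] by simp
    have ev: "eventually (\<lambda>n. a k (\<phi> n) > c) sequentially"
      using qlim[of k] c by (simp add: order_tendsto_iff)
    have "filterlim (E k) at_top sequentially"
    proof (rule L1[OF Dphi, of "s' - s"])
      show "0 < s' - s" using ss by simp
      show "\<forall>\<^sub>F n in sequentially. (s' - s) * D (\<phi> n) \<le> E k n"
        using ev Dpos
      proof eventually_elim
        case (elim n)
        then have "p k (\<phi> n) > s'" using acs arctan_less_iff[of s' "p k (\<phi> n)"] by (simp add: a_def)
        then show ?case using elim Ep[of n k] by (simp add: mult.commute mult_left_mono)
      qed
    qed
    then have "filterlim (\<lambda>n. - E k n) at_bot sequentially"
      by (simp add: filterlim_uminus_at_top)
    then show ?thesis unfolding e4 using L0 by blast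
  next
    case False
    have "q k \<noteq> t" using t by auto
    then have Fq: "q k < t" using False by simp
    define c where "c = (q k + t) / 2"
    have qk: "q k \<ge> -(pi/2)"
      using qlim[of k] by (rule LIMSEQ_le_const) (use arctan_lbound[THEN less_imp_le] in \<open>auto simp: a_def\<close>)
    have c: "c < t" "q k < c" "-(pi/2) < c" "c < pi/2" using Fq t tpi qk pi_gt3 by (auto simp: c_def)
    define s' where "s' = tan c"
    have acs: "arctan s' = c" unfolding s'_def using c by (intro arctan_tan) auto
    have ss: "s' < s" using acs ats c arctan_less_iff[of s' s] by simp
    have ev: "eventually (\<lambda>n. a k (\<phi> n) < c) sequentially"
      using qlim[of k] c by (simp add: order_tendsto_iff)
    have "filterlim (E k) at_bot sequentially"
    proof (rule L2[OF Dphi, of "s - s'"])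
      show "0 < s - s'" using ss by simp
      show "\<forall>\<^sub>F n in sequentially. E k n \<le> - (s - s') * D (\<phi> n)"
        using ev Dpos
      proof eventually_elim
        case (elim n)
        then have "p k (\<phi> n) < s'" using acs arctan_less_iff[of "p k (\<phi> n)" s'] by (simp add: a_def)
        then show ?case using elim Ep[of n k] by (simp add: mult_left_mono algebra_simps)
      qed
    qed
    then show ?thesis unfolding e3 using L0 by blast
  qed
  show ?thesis using phi mupos lim1 lim2 lim3 by blast
qed
end
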